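(* For any finite set of $\mathrm{B}'$-rules, the calculus $\mathbf{L}^*(/)$ extended with these $\mathrm{B}'$-rules admits cut elimination: every sequent derivable in it (using cut) is derivable without using the cut rule.
   Context: $\mathbf{L}^*(/)$ is the one-division Lambek calculus: formulae are built from variables using only $/$; sequents are $\Pi\to A$ with $\Pi$ a finite (possibly empty) sequence of formulae; axioms $A\to A$; rules ($/L$) from $\Pi\to A$ and $\Delta_1,B,\Delta_2\to C$ infer $\Delta_1,B/A,\Pi,\Delta_2\to C$; ($/R$) from $\Pi,A\to B$ infer $\Pi\to B/A$; (cut) from $\Pi\to A$ and $\Delta_1,A,\Delta_2\to C$ infer $\Delta_1,\Pi,\Delta_2\to C$. For a tuple $(q_1,\dots,q_m,r;p_1,\dots,p_k,t)$ of concrete variables, the corresponding $\mathrm{B}'$-rule is: from $\Pi_1\to p_1$, ..., $\Pi_k\to p_k$ and $\Delta,q_1,\dots,q_m\to r$ infer $\Pi_1,\dots,\Pi_k,\Delta\to t$, for arbitrary sequences of formulae $\Pi_1,\dots,\Pi_k,\Delta$. *)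

theory Defs
  imports Main
begin

text \<open>Formulae of the one-division Lambek calculus over variables of type 'v:
  Var p, and Div B A standing for B / A.\<close>
datatype 'v formula = Var 'v | Div "'v formula" "'v formula"

type_synonym 'v sequent = "'v formula list \<times> 'v formula"

text \<open>A B'-rule given by the tuple (q_1..q_m, r; p_1..p_k, t) of concrete variables,
  represented as (qs, r, ps, t).\<close>
type_synonym 'v brule = "'v list \<times> 'v \<times> 'v list \<times> 'v"

text \<open>Derivability in L*(/) extended with the B'-rules in R.  The flag c says
  whether the cut rule may be used (c = True) or not (c = False).\<close>
inductive derivable :: "'v brule set \<Rightarrow> bool \<Rightarrow> 'v sequent \<Rightarrow> bool"
  for R :: "'v brule set" and c :: bool where
  ax: "derivable R c ([A], A)"
| divL: "derivable R c (Pi, A) \<Longrightarrow> derivable R c (D1 @ [B] @ D2, C) \<Longrightarrow>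
         derivable R c (D1 @ [Div B A] @ Pi @ D2, C)"
| divR: "derivable R c (Pi @ [A], B) \<Longrightarrow> derivable R c (Pi, Div B A)"
| cut: "c \<Longrightarrow> derivable R c (Pi, A) \<Longrightarrow> derivable R c (D1 @ [A] @ D2, C) \<Longrightarrow>
         derivable R c (D1 @ Pi @ D2, C)"
| brule: "(qs, r, ps, t) \<in> R \<Longrightarrow> length Pis = length ps \<Longrightarrow>
          (\<forall>i < length ps. derivable R c (Pis ! i, Var (ps ! i))) \<Longrightarrow>
          derivable R c (D @ map Var qs, Var r) \<Longrightarrow>
          derivable R c (concat Pis @ D, Var t)"

end

theory Submission
  imports Defs
begin

lemma split_occ:
  assumes "xs @ ys = L @ [X] @ M"
  shows "(\<exists>E. xs = L @ [X] @ E \<and> M = E @ ys) \<or> (\<exists>E. ys = E @ [X] @ M \<and> L = xs @ E)"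
  using assms
  by (auto simp: append_eq_append_conv2 Cons_eq_append_conv append_eq_Cons_conv)

lemma split_concat:
  assumes "concat Pis @ D = L @ [X] @ M"
  shows "(\<exists>E. D = E @ [X] @ M \<and> L = concat Pis @ E) \<or>
    (\<exists>i a b. i < length Pis \<and> Pis ! i = a @ [X] @ b \<and> L = concat (take i Pis) @ a
       \<and> M = b @ concat (drop (Suc i) Pis) @ D)"
  using assms
proof (induction Pis arbitrary: L)
  case Nil
  then show ?case by auto
next
  case (Cons P Pis)
  from Cons.prems have "P @ (concat Pis @ D) = L @ [X] @ M" by simp
  from split_occ[OF this] show ?case
  proof
    assume "\<exists>E. P = L @ [X] @ E \<and> M = E @ concat Pis @ D"
    then obtain E where "P = L @ [X] @ E" "M = E @ concat Pis @ D" by blast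
    then have "0 < length (P # Pis) \<and> (P # Pis) ! 0 = L @ [X] @ E \<and> L = concat (take 0 (P#Pis)) @ L
       \<and> M = E @ concat (drop (Suc 0) (P#Pis)) @ D" by simp
    then show ?thesis by blast
  next
    assume "\<exists>E. concat Pis @ D = E @ [X] @ M \<and> L = P @ E"
    then obtain E where E: "concat Pis @ D = E @ [X] @ M" "L = P @ E" by blast
    from Cons.IH[OF E(1)] show ?thesis
    proof
      assume "\<exists>E'. D = E' @ [X] @ M \<and> E = concat Pis @ E'"
      then show ?thesis using E by auto
    next
      assume "\<exists>i a b. i < length Pis \<and> Pis ! i = a @ [X] @ b \<and> E = concat (take i Pis) @ a
       \<and> M = b @ concat (drop (Suc i) Pis) @ D"
      then obtain i a b where "i < length Pis" "Pis ! i = a @ [X] @ b" "E = concat (take i Pis) @ a"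
        "M = b @ concat (drop (Suc i) Pis) @ D" by blast
      then have "Suc i < length (P#Pis) \<and> (P#Pis) ! Suc i = a @ [X] @ b \<and> L = concat (take (Suc i) (P#Pis)) @ a
       \<and> M = b @ concat (drop (Suc (Suc i)) (P#Pis)) @ D" using E by simp
      then show ?thesis by blast
    qed
  qed
qed

lemma concat_upd:
  assumes "i < length Pis"
  shows "concat (Pis[i := Q]) = concat (take i Pis) @ Q @ concat (drop (Suc i) Pis)"
  using assms by (simp add: upd_conv_take_nth_drop)

lemma concat_split_nth:
  assumes "i < length Pis"
  shows "concat Pis = concat (take i Pis) @ Pis ! i @ concat (drop (Suc i) Pis)"
  using assms by (metis append_take_drop_id concat_append concat.simps(2) Cons_nth_drop_Suc)

lemma principal:
  assumes d: "derivable R False s"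
    and cutA: "\<And>P L M C. derivable R False (P, A) \<Longrightarrow> derivable R False (L @ [A] @ M, C)
                 \<Longrightarrow> derivable R False (L @ P @ M, C)"
    and cutB: "\<And>P L M C. derivable R False (P, B) \<Longrightarrow> derivable R False (L @ [B] @ M, C)
                 \<Longrightarrow> derivable R False (L @ P @ M, C)"
  shows "\<And>G. s = (G, Div B A) \<Longrightarrow> derivable R False (Pi, A) \<Longrightarrow>
     derivable R False (D1 @ [B] @ D2, C) \<Longrightarrow> derivable R False (D1 @ G @ Pi @ D2, C)"
  using d
proof (induction arbitrary: D1 D2 C rule: derivable.induct)
  case (ax A')
  then show ?case using derivable.divL[of R False Pi A D1 B D2 C] by auto
next
  case (divL P A' E1 B' E2 C')
  have "derivable R False ((D1 @ E1) @ [B'] @ (E2 @ Pi @ D2), C)"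
    using divL.IH(2)[of "E1 @ [B'] @ E2" D1 D2 C] divL.prems by simp
  from derivable.divL[OF divL.hyps(1) this] divL.prems show ?case by auto
next
  case (divR P A' B')
  then have h: "derivable R False (P @ [A], B)" by simp
  have "derivable R False (P @ Pi @ [], B)" by (rule cutA) (fact divR.prems(2), simp add: h)
  then have h2: "derivable R False (P @ Pi, B)" by simp
  have "derivable R False (D1 @ (P @ Pi) @ D2, C)" by (rule cutB[OF h2 divR.prems(3)])
  then show ?case using divR.prems(1) by simp
next
  case (cut P A' E1 E2 C')
  then show ?case by simp
next
  case (brule qs r ps t Pis D)
  then show ?case by simp
qed

lemma right_ind:
  assumes d: "derivable R False s"
    and p: "derivable R False (P, X)"
    and pr: "\<And>D1 D2 C B A Pi. X = Div B A \<Longrightarrow> derivable R False (Pi, A) \<Longrightarrow>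
       derivable R False (D1 @ [B] @ D2, C) \<Longrightarrow> derivable R False (D1 @ P @ Pi @ D2, C)"
  shows "\<And>L M. fst s = L @ [X] @ M \<Longrightarrow> derivable R False (L @ P @ M, snd s)"
  using d
proof (induction rule: derivable.induct)
  case (ax A)
  then show ?case using p by (auto simp: Cons_eq_append_conv append_eq_Cons_conv)
next
  case (divL Pi A D1 B D2 C L M)
  from divL.prems have "D1 @ ([Div B A] @ Pi @ D2) = L @ [X] @ M" by simp
  from split_occ[OF this] show ?case
  proof
    assume "\<exists>E. D1 = L @ [X] @ E \<and> M = E @ [Div B A] @ Pi @ D2"
    then obtain E where E: "D1 = L @ [X] @ E" "M = E @ [Div B A] @ Pi @ D2" by blast
    have "derivable R False (L @ P @ E @ [B] @ D2, C)" using divL.IH(2)[of L "E @ [B] @ D2"] E by simp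
    from derivable.divL[OF divL.hyps(1), of "L @ P @ E" B D2 C] this E show ?thesis by simp
  next
    assume "\<exists>E. [Div B A] @ Pi @ D2 = E @ [X] @ M \<and> L = D1 @ E"
    then obtain E where E: "[Div B A] @ Pi @ D2 = E @ [X] @ M" "L = D1 @ E" by blast
    show ?thesis
    proof (cases E)
      case Nil
      with E have "X = Div B A" "M = Pi @ D2" "L = D1" by auto
      with pr[OF this(1) divL.hyps(1) divL.hyps(2)] show ?thesis by simp
    next
      case (Cons e E')
      with E have E2: "Pi @ D2 = E' @ [X] @ M" "L = D1 @ [Div B A] @ E'" by auto
      from split_occ[OF E2(1)] show ?thesis
      proof
        assume "\<exists>F. Pi = E' @ [X] @ F \<and> M = F @ D2"
        then obtain F where F: "Pi = E' @ [X] @ F" "M = F @ D2" by blast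
        have "derivable R False (E' @ P @ F, A)" using divL.IH(1)[of E' F] F by simp
        from derivable.divL[OF this divL.hyps(2)] F E2 show ?thesis by simp
      next
        assume "\<exists>F. D2 = F @ [X] @ M \<and> E' = Pi @ F"
        then obtain F where F: "D2 = F @ [X] @ M" "E' = Pi @ F" by blast
        have "derivable R False ((D1 @ [B] @ F) @ P @ M, C)" using divL.IH(2)[of "D1 @ [B] @ F" M] F by simp
        from derivable.divL[OF divL.hyps(1) , of D1 B "F @ P @ M" C] this F E2 show ?thesis by simp
      qed
    qed
  qed
next
  case (divR Pi A B L M)
  have "derivable R False (L @ P @ M @ [A], B)" using divR.IH[of L "M @ [A]"] divR.prems by simp
  from derivable.divR[of R False "L @ P @ M" A B] this show ?case by simp
next
  case (cut Pi A D1 D2 C)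
  then show ?case by simp
next
  case (brule qs r ps t Pis D L M)
  from brule.prems have "concat Pis @ D = L @ [X] @ M" by simp
  from split_concat[OF this] show ?case
  proof
    assume "\<exists>E. D = E @ [X] @ M \<and> L = concat Pis @ E"
    then obtain E where E: "D = E @ [X] @ M" "L = concat Pis @ E" by blast
    have "derivable R False (E @ P @ M @ map Var qs, Var r)" using brule.IH(2)[of E "M @ map Var qs"] E by simp
    from derivable.brule[OF brule.hyps(1) brule.hyps(2), of False "E @ P @ M"] this brule.IH(1) E
    show ?thesis by auto
  next
    assume "\<exists>i a b. i < length Pis \<and> Pis ! i = a @ [X] @ b \<and> L = concat (take i Pis) @ a
       \<and> M = b @ concat (drop (Suc i) Pis) @ D"
    then obtain i a b where H: "i < length Pis" "Pis ! i = a @ [X] @ b" "L = concat (take i Pis) @ a"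
       "M = b @ concat (drop (Suc i) Pis) @ D" by blast
    define Pis' where "Pis' = Pis[i := a @ P @ b]"
    have len: "length Pis' = length ps" using brule.hyps(2) by (simp add: Pis'_def)
    have prem: "\<forall>j < length ps. derivable R False (Pis' ! j, Var (ps ! j))"
    proof (intro allI impI)
      fix j assume j: "j < length ps"
      show "derivable R False (Pis' ! j, Var (ps ! j))"
      proof (cases "j = i")
        case True
        then show ?thesis using brule.IH(1) j H unfolding Pis'_def by (simp add: brule.hyps(2))
      next
        case False
        then show ?thesis using brule.IH(1) j unfolding Pis'_def by simp
      qed
    qed
    from derivable.brule[OF brule.hyps(1) len prem brule.hyps(3)]
    have "derivable R False (concat Pis' @ D, Var t)" .
    moreover have "concat Pis' = concat (take i Pis) @ (a @ P @ b) @ concat (drop (Suc i) Pis)"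
      unfolding Pis'_def using concat_upd[OF H(1)] .
    ultimately show ?thesis using H by simp
  qed
qed

lemma cut_adm:
  "derivable R False (P, X) \<Longrightarrow> derivable R False (L @ [X] @ M, C) \<Longrightarrow> derivable R False (L @ P @ M, C)"
proof (induction X arbitrary: P L M C)
  case (Var x)
  show ?case using right_ind[OF Var(2) Var(1)] by fastforce
next
  case (Div B A)
  have pr: "derivable R False (D1 @ P @ Pi @ D2, C')" if "Div B A = Div B' A'" "derivable R False (Pi, A')"
      "derivable R False (D1 @ [B'] @ D2, C')" for D1 D2 C' B' A' Pi
    using principal[OF Div.prems(1), of A B, OF Div.IH(2) Div.IH(1)] that by auto
  show ?case using right_ind[OF Div.prems(2) Div.prems(1) pr] by fastforce
qed

theorem lemma4:
  fixes R :: "'v brule set" and s :: "'v sequent"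
  assumes "finite R"
    and "derivable R True s"
  shows "derivable R False s"
  using assms(2)
proof (induction rule: derivable.induct)
  case (ax A)
  then show ?case by (rule derivable.ax)
next
  case (divL Pi A D1 B D2 C)
  then show ?case using derivable.divL[of R False Pi A D1 B D2 C] by simp
next
  case (divR Pi A B)
  then show ?case by (simp add: derivable.divR)
next
  case (cut Pi A D1 D2 C)
  then show ?case using cut_adm by blast
next
  case (brule qs r ps t Pis D)
  then show ?case by (simp add: derivable.brule)
qed

end
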